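(* Let $L$ be a finite index set and let $Z=(Z^{(u)})_{u\in L}$, where each $Z^{(u)}\in\mathbb{R}^{n_u}$ (entries indexed by $j$). Let $k$ be a positive integer and, for each $u\in L$, let $\alpha^{(u)}_1,\alpha^{(u)}_2,\alpha^{(u)}_3,\alpha^{(u)}_4\ge 0$ with $\alpha^{(u)}_1\le\alpha^{(u)}_2$, and let $E_{\rm budget}\in\mathbb{R}$ with $C:=E_{\rm budget}-\sum_{u\in L}\alpha^{(u)}_4\ge 0$. For each $u$, fix a set $T^{(u)}$ of $\min(k,n_u)$ indices $j$ such that every $|Z^{(u)}_j|$ with $j\in T^{(u)}$ is at least every $|Z^{(u)}_{j'}|$ with $j'\notin T^{(u)}$ (ties broken arbitrarily), and define $A=(A^{(u)})_{u\in L}$ of the same shape as $Z$ by $A^{(u)}_j=\alpha^{(u)}_1+\alpha^{(u)}_3$ if $j\in T^{(u)}$ and $A^{(u)}_j=\alpha^{(u)}_2+\alpha^{(u)}_3$ otherwise. Consider the projection problem $$\mathrm{P}_{\Omega(E_{\rm budget})}(Z):=\operatorname{argmin}_{W\in\Omega(E_{\rm budget})}\|W-Z\|^2$$ and the $0/1$ knapsack problem $$\max_{\xi\ \text{binary, same shape as } Z}\ \langle Z\odot Z,\xi\rangle\quad\text{s.t.}\quad \langle A,\xi\rangle\le C.$$ Then these problems are equivalent: $\min_{W\in\Omega(E_{\rm budget})}\|W-Z\|^2=\|Z\|^2-\max\{\langle Z\odot Z,\xi\rangle:\xi\text{ binary},\ \langle A,\xi\rangle\le C\}$, and if $\xi^*$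 is an optimal solution of the knapsack problem, then $Z\odot\xi^*\in\Omega(E_{\rm budget})$ and $Z\odot\xi^*$ is an optimal solution of the projection problem.
   Context: For $W=(W^{(u)})_{u\in L}$ with $W^{(u)}\in\mathbb{R}^{n_u}$, $\|W^{(u)}\|_0$ denotes the number of nonzero entries and $\|W\|^2=\sum_u\sum_j (W^{(u)}_j)^2$. The energy-constraint set is $$\Omega(E_{\rm budget})=\Big\{W:\ \sum_{u\in L}\Big(\alpha^{(u)}_1\min(k,\|W^{(u)}\|_0)+\alpha^{(u)}_2\max(0,\|W^{(u)}\|_0-k)+\alpha^{(u)}_3\|W^{(u)}\|_0+\alpha^{(u)}_4\Big)\le E_{\rm budget}\Big\}.$$ $\odot$ is the entrywise product, $\langle\cdot,\cdot\rangle$ the entrywise inner product, and "binary" means all entries lie in $\{0,1\}$. *)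

theory Defs
  imports Complex_Main
begin

text \<open>A family W = (W^(u))_{u in L} with W^(u) in R^{n u} is represented as a function
  W :: 'u => nat => real, where only the entries W u j with u in L and j < n u are meaningful.\<close>

definition l0 :: "('u \<Rightarrow> nat) \<Rightarrow> ('u \<Rightarrow> nat \<Rightarrow> real) \<Rightarrow> 'u \<Rightarrow> nat" where
  "l0 n W u = card {j. j < n u \<and> W u j \<noteq> 0}"

definition sqnorm :: "'u set \<Rightarrow> ('u \<Rightarrow> nat) \<Rightarrow> ('u \<Rightarrow> nat \<Rightarrow> real) \<Rightarrow> real" where
  "sqnorm L n W = (\<Sum>u\<in>L. \<Sum>j<n u. (W u j)^2)"

definition inner_fam :: "'u set \<Rightarrow> ('u \<Rightarrow> nat) \<Rightarrow> ('u \<Rightarrow> nat \<Rightarrow> real) \<Rightarrow> ('u \<Rightarrow> nat \<Rightarrow> real) \<Rightarrow> real" where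
  "inner_fam L n X Y = (\<Sum>u\<in>L. \<Sum>j<n u. X u j * Y u j)"

definition hadamard :: "('u \<Rightarrow> nat \<Rightarrow> real) \<Rightarrow> ('u \<Rightarrow> nat \<Rightarrow> real) \<Rightarrow> ('u \<Rightarrow> nat \<Rightarrow> real)" where
  "hadamard X Y = (\<lambda>u j. X u j * Y u j)"

definition binary :: "'u set \<Rightarrow> ('u \<Rightarrow> nat) \<Rightarrow> ('u \<Rightarrow> nat \<Rightarrow> real) \<Rightarrow> bool" where
  "binary L n X \<longleftrightarrow> (\<forall>u\<in>L. \<forall>j<n u. X u j \<in> {0, 1})"

definition Omega :: "'u set \<Rightarrow> ('u \<Rightarrow> nat) \<Rightarrow> nat \<Rightarrow> ('u \<Rightarrow> nat \<Rightarrow> real) \<Rightarrow> real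
    \<Rightarrow> ('u \<Rightarrow> nat \<Rightarrow> real) set" where
  "Omega L n k alpha E = {W. (\<Sum>u\<in>L. alpha u 1 * real (min k (l0 n W u))
        + alpha u 2 * max 0 (real (l0 n W u) - real k)
        + alpha u 3 * real (l0 n W u) + alpha u 4) \<le> E}"

definition Amat :: "('u \<Rightarrow> nat set) \<Rightarrow> ('u \<Rightarrow> nat \<Rightarrow> real) \<Rightarrow> ('u \<Rightarrow> nat \<Rightarrow> real)" where
  "Amat T alpha = (\<lambda>u j. if j \<in> T u then alpha u 1 + alpha u 3 else alpha u 2 + alpha u 3)"

end

theory Submission
  imports Defs
begin

lemma cmp_sum:
  fixes g :: "nat \<Rightarrow> real"
  assumes fX: "finite X" and cXY: "card X = card Y" and XT: "X \<subseteq> T"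
    and YT: "Y \<inter> T = {}" and YN: "Y \<subseteq> {..<N}"
    and top: "\<forall>j\<in>T. \<forall>j'\<in>{..<N}-T. g j' \<le> g j"
  shows "sum g Y \<le> sum g X"
proof (cases "X = {}")
  case True
  then have "Y = {}" using cXY YN finite_subset[OF YN] by auto
  then show ?thesis using True by simp
next
  case False
  define m where "m = Min (g ` X)"
  have "m \<in> g ` X" unfolding m_def using False fX by simp
  then obtain x0 where x0: "x0 \<in> X" "g x0 = m" by auto
  have "\<forall>x\<in>X. m \<le> g x" unfolding m_def using fX by simp
  then have "real (card X) * m \<le> sum g X" by (intro sum_bounded_below) auto
  moreover have "\<forall>y\<in>Y. g y \<le> m" using top x0 XT YT YN by blast
  then have "sum g Y \<le> real (card Y) * m" by (intro sum_bounded_above) auto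
  ultimately show ?thesis using cXY by simp
qed

lemma exchange:
  fixes g :: "nat \<Rightarrow> real"
  assumes TN: "T \<subseteq> {..<N}" and SN: "S \<subseteq> {..<N}"
    and top: "\<forall>j\<in>T. \<forall>j'\<in>{..<N}-T. g j' \<le> g j"
  shows "\<exists>S'\<subseteq>{..<N}. card (S' \<inter> T) = min (card S) (card T)
     \<and> card (S' - T) = card S - min (card S) (card T) \<and> sum g S \<le> sum g S'"
proof -
  have fS: "finite S" and fT: "finite T" using TN SN finite_subset by auto
  define a where "a = card (S \<inter> T)"
  define q where "q = min (card S) (card T)"
  have cS: "card S = a + card (S - T)" unfolding a_def using fS
    by (metis Int_Diff_disjoint Int_Diff_Un card_Un_disjoint finite_Diff finite_Int)
  have aT: "a \<le> card T" unfolding a_def using fT by (simp add: card_mono)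
  have aq: "a \<le> q" unfolding q_def using aT cS by simp
  have cTS: "card (T - S) = card T - a" unfolding a_def using fT
    by (metis Int_commute card_Diff_subset_Int finite_Int)
  obtain R where R: "R \<subseteq> T - S" "card R = q - a" "finite R"
    using obtain_subset_with_card_n[of "q - a" "T - S"] cTS q_def aq by force
  have "card S - q \<le> card (S - T)" using cS aq by simp
  then obtain Y where Y: "Y \<subseteq> S - T" "card Y = card S - q" "finite Y"
    using obtain_subset_with_card_n[of "card S - q" "S - T"] by force
  define S' where "S' = (S \<inter> T) \<union> R \<union> Y"
  have S'T: "S' \<inter> T = (S \<inter> T) \<union> R" unfolding S'_def using R Y by blast
  have "card ((S \<inter> T) \<union> R) = card (S \<inter> T) + card R"
    using R fS by (intro card_Un_disjoint) auto
  then have "card ((S \<inter> T) \<union> R) = q" using R(2) aq a_def by simp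
  then have c1: "card (S' \<inter> T) = q" using S'T by simp
  have c2: "S' - T = Y" unfolding S'_def using R Y by blast
  have fST: "finite (S \<inter> T)" using fS by simp
  have d1: "(S \<inter> T) \<inter> R = {}" using R by blast
  have d2: "((S \<inter> T) \<union> R) \<inter> Y = {}" using R Y by blast
  have "sum g S' = sum g ((S \<inter> T) \<union> R) + sum g Y"
    unfolding S'_def using d2 fST R Y by (intro sum.union_disjoint) auto
  also have "sum g ((S \<inter> T) \<union> R) = sum g (S \<inter> T) + sum g R"
    using d1 fST R by (intro sum.union_disjoint) auto
  finally have sS': "sum g S' = sum g (S \<inter> T) + sum g R + sum g Y" .
  have fY2: "finite ((S - T) - Y)" using fS by simp
  have eqS: "S = ((S \<inter> T) \<union> Y) \<union> ((S - T) - Y)" using Y by blast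
  have d3: "(S \<inter> T) \<inter> Y = {}" using Y by blast
  have d4: "((S \<inter> T) \<union> Y) \<inter> ((S - T) - Y) = {}" by blast
  have "sum g S = sum g (((S \<inter> T) \<union> Y) \<union> ((S - T) - Y))"
    by (rule arg_cong[where f="sum g", OF eqS])
  also have "\<dots> = sum g ((S \<inter> T) \<union> Y) + sum g ((S - T) - Y)"
    using d4 fST Y fY2 by (intro sum.union_disjoint) auto
  also have "sum g ((S \<inter> T) \<union> Y) = sum g (S \<inter> T) + sum g Y"
    using d3 fST Y by (intro sum.union_disjoint) auto
  finally have sS: "sum g S = sum g (S \<inter> T) + sum g Y + sum g ((S - T) - Y)" .
  have "card ((S - T) - Y) = card (S - T) - card Y" using Y fS by (simp add: card_Diff_subset)
  then have "card ((S - T) - Y) = card R" using R Y cS aq q_def by simp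
  then have "sum g ((S - T) - Y) \<le> sum g R"
  proof (intro cmp_sum[of R "(S-T)-Y" T N g])
    show "(S - T) - Y \<subseteq> {..<N}" using SN by blast
  qed (use R SN top in auto)
  then have "sum g S \<le> sum g S'" using sS sS' by simp
  moreover have "S' \<subseteq> {..<N}" unfolding S'_def using SN R Y TN by blast
  moreover have c2': "card (S' - T) = card S - q" using c2 Y by simp
  ultimately show ?thesis using c1 unfolding q_def[symmetric] by blast
qed


lemma arithA:
  fixes a1 a2 a3 :: real and s m p k :: nat
  assumes "0 \<le> a1" "a1 \<le> a2" "0 \<le> a3" "s \<le> m" "p \<le> k" "p \<le> m"
  shows "a1 * real (min k s) + a2 * max 0 (real s - real k) + a3 * real s
     \<le> (a1 + a3) * real p + (a2 + a3) * real (m - p)"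
proof -
  have a2: "0 \<le> a2" using assms by linarith
  have "a1 * real (min k s) \<le> a1 * real (min k m)"
    using assms by (intro mult_left_mono) auto
  moreover have "a2 * max 0 (real s - real k) \<le> a2 * max 0 (real m - real k)"
    using assms a2 by (intro mult_left_mono) auto
  moreover have "a3 * real s \<le> a3 * real m"
    using assms by (intro mult_left_mono) auto
  moreover have "a1 * real (min k m) + a2 * max 0 (real m - real k) + a3 * real m
     \<le> (a1 + a3) * real p + (a2 + a3) * real (m - p)"
  proof (cases "m \<le> k")
    case True
    have "0 \<le> (a2 - a1) * (real m - real p)" using assms by (intro mult_nonneg_nonneg) auto
    then show ?thesis using True assms by (simp add: of_nat_diff algebra_simps)
  next
    case False
    have "0 \<le> (a2 - a1) * (real k - real p)" using assms by (intro mult_nonneg_nonneg) auto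
    then show ?thesis using False assms by (simp add: of_nat_diff algebra_simps)
  qed
  ultimately show ?thesis by linarith
qed

lemma perA:
  fixes z x :: "nat \<Rightarrow> real"
  assumes bin: "\<forall>j<N. x j \<in> {0,1}" and TN: "T \<subseteq> {..<N}" and cT: "card T = min k N"
    and al: "0 \<le> a1" "a1 \<le> a2" "0 \<le> a3"
  shows "a1 * real (min k (card {j. j<N \<and> z j * x j \<noteq> 0}))
       + a2 * max 0 (real (card {j. j<N \<and> z j * x j \<noteq> 0}) - real k)
       + a3 * real (card {j. j<N \<and> z j * x j \<noteq> 0})
     \<le> (\<Sum>j<N. (if j \<in> T then a1 + a3 else a2 + a3) * x j)"
    and "(\<Sum>j<N. (z j * x j - z j)^2) = (\<Sum>j<N. (z j)^2) - (\<Sum>j<N. z j * z j * x j)"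
proof -
  define P where "P = {j. j<N \<and> x j = 1}"
  define c where "c = (\<lambda>j. if j \<in> T then a1 + a3 else a2 + a3)"
  have fP: "finite P" unfolding P_def by simp
  have sub: "{j. j<N \<and> z j * x j \<noteq> 0} \<subseteq> P" unfolding P_def using bin by auto
  have sm: "card {j. j<N \<and> z j * x j \<noteq> 0} \<le> card P" using sub fP by (rule card_mono[rotated])
  have "(\<Sum>j<N. c j * x j) = (\<Sum>j<N. if j \<in> P then c j else 0)"
    by (rule sum.cong) (use bin in \<open>auto simp: P_def\<close>)
  also have "\<dots> = sum c ({..<N} \<inter> P)" by (rule sum.inter_restrict[symmetric]) simp
  also have "{..<N} \<inter> P = P" unfolding P_def by auto
  also have "sum c P = sum c (P \<inter> T) + sum c (P - T)" using fP by (rule sum.Int_Diff)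
  also have "sum c (P \<inter> T) = (a1 + a3) * real (card (P \<inter> T))" unfolding c_def by simp
  also have "sum c (P - T) = (a2 + a3) * real (card (P - T))" unfolding c_def by simp
  finally have cost: "(\<Sum>j<N. c j * x j) = (a1 + a3) * real (card (P \<inter> T)) + (a2 + a3) * real (card P - card (P \<inter> T))"
    using fP by (simp add: card_Diff_subset_Int Int_commute)
  have "card P - card (P \<inter> T) = card P - card (P \<inter> T)" ..
  have pk: "card (P \<inter> T) \<le> k" using card_mono[of T "P \<inter> T"] TN cT finite_subset by fastforce
  have pm: "card (P \<inter> T) \<le> card P" using fP by (simp add: card_mono)
  show "a1 * real (min k (card {j. j<N \<and> z j * x j \<noteq> 0}))
       + a2 * max 0 (real (card {j. j<N \<and> z j * x j \<noteq> 0}) - real k)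
       + a3 * real (card {j. j<N \<and> z j * x j \<noteq> 0})
     \<le> (\<Sum>j<N. (if j \<in> T then a1 + a3 else a2 + a3) * x j)"
    using arithA[OF al sm pk pm] cost unfolding c_def by simp
  show "(\<Sum>j<N. (z j * x j - z j)^2) = (\<Sum>j<N. (z j)^2) - (\<Sum>j<N. z j * z j * x j)"
  proof -
    have "(\<Sum>j<N. (z j * x j - z j)^2) = (\<Sum>j<N. (z j)^2 - z j * z j * x j)"
    proof (rule sum.cong)
      fix j assume "j \<in> {..<N}"
      then have "x j = 0 \<or> x j = 1" using bin by auto
      then show "(z j * x j - z j)^2 = (z j)^2 - z j * z j * x j"
        by (auto simp: power2_eq_square)
    qed simp
    then show ?thesis by (simp add: sum_subtractf)
  qed
qed


lemma perB:
  fixes z w :: "nat \<Rightarrow> real"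
  assumes TN: "T \<subseteq> {..<N}" and cT: "card T = min k N"
    and top: "\<forall>j\<in>T. \<forall>j'\<in>{..<N}-T. \<bar>z j'\<bar> \<le> \<bar>z j\<bar>"
  shows "\<exists>x. (\<forall>j<N. x j \<in> {0,1})
     \<and> (\<Sum>j<N. (if j \<in> T then a1 + a3 else a2 + a3) * x j)
        = a1 * real (min k (card {j. j<N \<and> w j \<noteq> 0}))
          + a2 * max 0 (real (card {j. j<N \<and> w j \<noteq> 0}) - real k)
          + a3 * real (card {j. j<N \<and> w j \<noteq> 0})
     \<and> (\<Sum>j<N. (z j)^2) - (\<Sum>j<N. z j * z j * x j) \<le> (\<Sum>j<N. (w j - z j)^2)"
proof -
  define S where "S = {j. j<N \<and> w j \<noteq> 0}"
  define s where "s = card S"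
  define g where "g = (\<lambda>j. (z j)^2)"
  define c where "c = (\<lambda>j. if j \<in> T then a1 + a3 else a2 + a3)"
  have SN: "S \<subseteq> {..<N}" unfolding S_def by auto
  have topg: "\<forall>j\<in>T. \<forall>j'\<in>{..<N}-T. g j' \<le> g j"
    using top unfolding g_def by (simp add: abs_le_square_iff)
  obtain S' where S': "S' \<subseteq> {..<N}" "card (S' \<inter> T) = min s (card T)"
      "card (S' - T) = s - min s (card T)" "sum g S \<le> sum g S'"
    using exchange[OF TN SN topg] unfolding s_def by blast
  have sN: "s \<le> N" unfolding s_def using card_mono[OF _ SN] by simp
  have q: "min s (card T) = min k s" using cT sN by simp
  have fS': "finite S'" using S'(1) finite_subset by blast
  define x where "x = (\<lambda>j. if j \<in> S' then 1 else (0::real))"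
  have bin: "\<forall>j<N. x j \<in> {0,1}" unfolding x_def by simp
  have "(\<Sum>j<N. c j * x j) = (\<Sum>j<N. if j \<in> S' then c j else 0)"
    unfolding x_def by (rule sum.cong) auto
  also have "\<dots> = sum c ({..<N} \<inter> S')" by (rule sum.inter_restrict[symmetric]) simp
  also have "{..<N} \<inter> S' = S'" using S'(1) by auto
  also have "sum c S' = sum c (S' \<inter> T) + sum c (S' - T)" using fS' by (rule sum.Int_Diff)
  also have "sum c (S' \<inter> T) = (a1 + a3) * real (card (S' \<inter> T))" unfolding c_def by simp
  also have "sum c (S' - T) = (a2 + a3) * real (card (S' - T))" unfolding c_def by simp
  finally have cost: "(\<Sum>j<N. c j * x j) = (a1 + a3) * real (min k s) + (a2 + a3) * real (s - min k s)"
    using S'(2,3) q by simp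
  have h1: "real (s - min k s) = real s - real (min k s)" by (simp add: of_nat_diff)
  have h2: "max 0 (real s - real k) = real s - real (min k s)" by (simp add: max_def min_def)
  have cost2: "(\<Sum>j<N. c j * x j) = a1 * real (min k s) + a2 * max 0 (real s - real k) + a3 * real s"
    unfolding cost h1 h2 by (simp add: algebra_simps)
  have obj: "(\<Sum>j<N. z j * z j * x j) = sum g S'"
  proof -
    have "(\<Sum>j<N. z j * z j * x j) = (\<Sum>j<N. if j \<in> S' then g j else 0)"
      unfolding x_def g_def by (rule sum.cong) (auto simp: power2_eq_square)
    also have "\<dots> = sum g ({..<N} \<inter> S')" by (rule sum.inter_restrict[symmetric]) simp
    also have "{..<N} \<inter> S' = S'" using S'(1) by auto
    finally show ?thesis .
  qed
  have "(\<Sum>j<N. g j) - sum g S = (\<Sum>j<N. if j \<in> S then 0 else g j)"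
  proof -
    have "(\<Sum>j<N. g j) = (\<Sum>j<N. (if j \<in> S then g j else 0) + (if j \<in> S then 0 else g j))"
      by (rule sum.cong) auto
    also have "\<dots> = (\<Sum>j<N. if j \<in> S then g j else 0) + (\<Sum>j<N. if j \<in> S then 0 else g j)"
      by (rule sum.distrib)
    also have "(\<Sum>j<N. if j \<in> S then g j else 0) = sum g ({..<N} \<inter> S)"
      by (rule sum.inter_restrict[symmetric]) simp
    also have "{..<N} \<inter> S = S" using SN by auto
    finally show ?thesis by simp
  qed
  also have "\<dots> \<le> (\<Sum>j<N. (w j - z j)^2)"
    by (rule sum_mono) (auto simp: S_def g_def)
  finally have dist: "(\<Sum>j<N. g j) - sum g S \<le> (\<Sum>j<N. (w j - z j)^2)" .
  show ?thesis
  proof (intro exI[of _ x] conjI)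
    show "\<forall>j<N. x j \<in> {0,1}" by (rule bin)
    show "(\<Sum>j<N. (if j \<in> T then a1 + a3 else a2 + a3) * x j)
        = a1 * real (min k (card {j. j<N \<and> w j \<noteq> 0}))
          + a2 * max 0 (real (card {j. j<N \<and> w j \<noteq> 0}) - real k)
          + a3 * real (card {j. j<N \<and> w j \<noteq> 0})"
      using cost2 unfolding c_def s_def S_def .
    show "(\<Sum>j<N. (z j)^2) - (\<Sum>j<N. z j * z j * x j) \<le> (\<Sum>j<N. (w j - z j)^2)"
      using dist obj S'(4) unfolding g_def by linarith
  qed
qed


theorem theorem1:
  fixes L :: "'u set" and n :: "'u \<Rightarrow> nat" and Z :: "'u \<Rightarrow> nat \<Rightarrow> real"
    and k :: nat and alpha :: "'u \<Rightarrow> nat \<Rightarrow> real" and E :: real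
    and T :: "'u \<Rightarrow> nat set"
  assumes finL: "finite L"
    and kpos: "k > 0"
    and alpha_nonneg: "\<forall>u\<in>L. \<forall>i\<in>{1,2,3,4}. alpha u i \<ge> 0"
    and alpha12: "\<forall>u\<in>L. alpha u 1 \<le> alpha u 2"
    and Cnonneg: "E - (\<Sum>u\<in>L. alpha u 4) \<ge> 0"
    and T_sub: "\<forall>u\<in>L. T u \<subseteq> {..<n u}"
    and T_card: "\<forall>u\<in>L. card (T u) = min k (n u)"
    and T_top: "\<forall>u\<in>L. \<forall>j\<in>T u. \<forall>j'\<in>{..<n u} - T u. \<bar>Z u j'\<bar> \<le> \<bar>Z u j\<bar>"
  shows
    "(let C = E - (\<Sum>u\<in>L. alpha u 4);
          feas = {\<xi>. binary L n \<xi> \<and> inner_fam L n (Amat T alpha) \<xi> \<le> C};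
          obj = (\<lambda>\<xi>. inner_fam L n (hadamard Z Z) \<xi>);
          M = sqnorm L n Z - Max (obj ` feas)
      in (\<exists>W\<in>Omega L n k alpha E. sqnorm L n (\<lambda>u j. W u j - Z u j) = M)
       \<and> (\<forall>W\<in>Omega L n k alpha E. M \<le> sqnorm L n (\<lambda>u j. W u j - Z u j))
       \<and> (\<forall>\<xi>s\<in>feas. (\<forall>\<xi>\<in>feas. obj \<xi> \<le> obj \<xi>s) \<longrightarrow>
            hadamard Z \<xi>s \<in> Omega L n k alpha E
          \<and> (\<forall>W\<in>Omega L n k alpha E.
                sqnorm L n (\<lambda>u j. hadamard Z \<xi>s u j - Z u j) \<le> sqnorm L n (\<lambda>u j. W u j - Z u j))))"
proof -
  define C where "C = E - (\<Sum>u\<in>L. alpha u 4)"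
  define feas where "feas = {\<xi>. binary L n \<xi> \<and> inner_fam L n (Amat T alpha) \<xi> \<le> C}"
  define obj where "obj = (\<lambda>\<xi>. inner_fam L n (hadamard Z Z) \<xi>)"
  define en where "en = (\<lambda>W u. alpha u 1 * real (min k (l0 n W u))
        + alpha u 2 * max 0 (real (l0 n W u) - real k)
        + alpha u 3 * real (l0 n W u))"
  have OmI: "W \<in> Omega L n k alpha E \<longleftrightarrow> (\<Sum>u\<in>L. en W u) \<le> C" for W
  proof -
    have "(\<Sum>u\<in>L. en W u + alpha u 4) = (\<Sum>u\<in>L. en W u) + (\<Sum>u\<in>L. alpha u 4)"
      by (rule sum.distrib)
    then show ?thesis unfolding Omega_def C_def en_def mem_Collect_eq by linarith
  qed
  have A: "hadamard Z \<xi> \<in> Omega L n k alpha E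
      \<and> sqnorm L n (\<lambda>u j. hadamard Z \<xi> u j - Z u j) = sqnorm L n Z - obj \<xi>"
    if xf: "\<xi> \<in> feas" for \<xi>
  proof -
    have bin: "\<forall>u\<in>L. \<forall>j<n u. \<xi> u j \<in> {0,1}" and cst: "inner_fam L n (Amat T alpha) \<xi> \<le> C"
      using xf unfolding feas_def binary_def by auto
    have pu: "en (hadamard Z \<xi>) u \<le> (\<Sum>j<n u. Amat T alpha u j * \<xi> u j)
       \<and> (\<Sum>j<n u. (Z u j * \<xi> u j - Z u j)^2) = (\<Sum>j<n u. (Z u j)^2) - (\<Sum>j<n u. Z u j * Z u j * \<xi> u j)"
      if u: "u \<in> L" for u
    proof -
      have al: "0 \<le> alpha u 1" "alpha u 1 \<le> alpha u 2" "0 \<le> alpha u 3"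
        using alpha_nonneg alpha12 u by auto
      note r = perA[of "n u" "\<xi> u" "T u" k "alpha u 1" "alpha u 2" "alpha u 3" "Z u",
          OF _ _ _ al]
      show ?thesis using r bin T_sub T_card u
        unfolding en_def l0_def hadamard_def Amat_def by auto
    qed
    have "(\<Sum>u\<in>L. en (hadamard Z \<xi>) u) \<le> inner_fam L n (Amat T alpha) \<xi>"
      unfolding inner_fam_def using pu by (intro sum_mono) auto
    then have om: "hadamard Z \<xi> \<in> Omega L n k alpha E" unfolding OmI using cst by linarith
    have "sqnorm L n (\<lambda>u j. hadamard Z \<xi> u j - Z u j)
        = (\<Sum>u\<in>L. (\<Sum>j<n u. (Z u j)^2) - (\<Sum>j<n u. Z u j * Z u j * \<xi> u j))"
      unfolding sqnorm_def hadamard_def using pu by (intro sum.cong) auto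
    also have "\<dots> = sqnorm L n Z - obj \<xi>"
      unfolding sqnorm_def obj_def inner_fam_def hadamard_def by (simp add: sum_subtractf)
    finally show ?thesis using om by simp
  qed
  have B: "\<exists>\<xi>\<in>feas. sqnorm L n Z - obj \<xi> \<le> sqnorm L n (\<lambda>u j. W u j - Z u j)"
    if W: "W \<in> Omega L n k alpha E" for W
  proof -
    have "\<forall>u\<in>L. \<exists>x. (\<forall>j<n u. x j \<in> {0,1})
     \<and> (\<Sum>j<n u. Amat T alpha u j * x j) = en W u
     \<and> (\<Sum>j<n u. (Z u j)^2) - (\<Sum>j<n u. Z u j * Z u j * x j) \<le> (\<Sum>j<n u. (W u j - Z u j)^2)"
    proof
      fix u assume u: "u \<in> L"
      show "\<exists>x. (\<forall>j<n u. x j \<in> {0,1})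
     \<and> (\<Sum>j<n u. Amat T alpha u j * x j) = en W u
     \<and> (\<Sum>j<n u. (Z u j)^2) - (\<Sum>j<n u. Z u j * Z u j * x j) \<le> (\<Sum>j<n u. (W u j - Z u j)^2)"
        using perB[of "T u" "n u" k "Z u" "alpha u 1" "alpha u 3" "alpha u 2" "W u"]
          T_sub T_card T_top u
        unfolding en_def l0_def Amat_def by auto
    qed
    then have "\<exists>X. \<forall>u\<in>L. (\<forall>j<n u. X u j \<in> {0,1})
     \<and> (\<Sum>j<n u. Amat T alpha u j * X u j) = en W u
     \<and> (\<Sum>j<n u. (Z u j)^2) - (\<Sum>j<n u. Z u j * Z u j * X u j) \<le> (\<Sum>j<n u. (W u j - Z u j)^2)"
      by (rule bchoice)
    then obtain X where X: "\<And>u. u \<in> L \<Longrightarrow> (\<forall>j<n u. X u j \<in> {0,1})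
     \<and> (\<Sum>j<n u. Amat T alpha u j * X u j) = en W u
     \<and> (\<Sum>j<n u. (Z u j)^2) - (\<Sum>j<n u. Z u j * Z u j * X u j) \<le> (\<Sum>j<n u. (W u j - Z u j)^2)"
      by blast
    have "inner_fam L n (Amat T alpha) X = (\<Sum>u\<in>L. en W u)"
      unfolding inner_fam_def using X by (intro sum.cong) auto
    then have fX: "X \<in> feas" unfolding feas_def binary_def using X OmI W by auto
    have "sqnorm L n Z - obj X
        = (\<Sum>u\<in>L. (\<Sum>j<n u. (Z u j)^2) - (\<Sum>j<n u. Z u j * Z u j * X u j))"
      unfolding sqnorm_def obj_def inner_fam_def hadamard_def by (simp add: sum_subtractf)
    also have "\<dots> \<le> sqnorm L n (\<lambda>u j. W u j - Z u j)"
      unfolding sqnorm_def using X by (intro sum_mono) auto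
    finally show ?thesis using fX by blast
  qed
  define g where "g = (\<lambda>P. (\<Sum>u\<in>L. \<Sum>j<n u. Z u j * Z u j * (if (u, j) \<in> P then 1 else (0::real))))"
  have "obj ` feas \<subseteq> g ` Pow (Sigma L (\<lambda>u. {..<n u}))"
  proof
    fix y assume "y \<in> obj ` feas"
    then obtain \<xi> where xf: "\<xi> \<in> feas" and y: "y = obj \<xi>" by auto
    have bin: "\<forall>u\<in>L. \<forall>j<n u. \<xi> u j \<in> {0,1}" using xf unfolding feas_def binary_def by auto
    define P where "P = {(u, j). u \<in> L \<and> j < n u \<and> \<xi> u j = 1}"
    have "obj \<xi> = g P"
      unfolding obj_def g_def inner_fam_def hadamard_def
    proof (intro sum.cong refl)
      fix u j assume "u \<in> L" "j \<in> {..<n u}"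
      then show "Z u j * Z u j * \<xi> u j = Z u j * Z u j * (if (u, j) \<in> P then 1 else 0)"
        using bin unfolding P_def by auto
    qed
    moreover have "P \<in> Pow (Sigma L (\<lambda>u. {..<n u}))" unfolding P_def by auto
    ultimately show "y \<in> g ` Pow (Sigma L (\<lambda>u. {..<n u}))" using y by blast
  qed
  moreover have "finite (Sigma L (\<lambda>u. {..<n u}))" using finL by simp
  ultimately have fin: "finite (obj ` feas)" by (meson finite_Pow_iff finite_imageI finite_subset)
  have "(\<lambda>u j. 0) \<in> feas" unfolding feas_def binary_def inner_fam_def using Cnonneg C_def by simp
  then have ne: "obj ` feas \<noteq> {}" by blast
  define mx where "mx = Max (obj ` feas)"
  have ge: "\<And>\<xi>. \<xi> \<in> feas \<Longrightarrow> obj \<xi> \<le> mx" unfolding mx_def using fin by simp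
  obtain \<xi>0 where x0: "\<xi>0 \<in> feas" "obj \<xi>0 = mx"
    using Max_in[OF fin ne] unfolding mx_def by auto
  have lower: "\<forall>W\<in>Omega L n k alpha E. sqnorm L n Z - mx \<le> sqnorm L n (\<lambda>u j. W u j - Z u j)"
  proof
    fix W assume "W \<in> Omega L n k alpha E"
    then obtain \<xi> where "\<xi> \<in> feas" "sqnorm L n Z - obj \<xi> \<le> sqnorm L n (\<lambda>u j. W u j - Z u j)"
      using B by blast
    then show "sqnorm L n Z - mx \<le> sqnorm L n (\<lambda>u j. W u j - Z u j)" using ge by force
  qed
  have R: "(\<exists>W\<in>Omega L n k alpha E. sqnorm L n (\<lambda>u j. W u j - Z u j) = sqnorm L n Z - mx)
       \<and> (\<forall>W\<in>Omega L n k alpha E. sqnorm L n Z - mx \<le> sqnorm L n (\<lambda>u j. W u j - Z u j))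
       \<and> (\<forall>\<xi>s\<in>feas. (\<forall>\<xi>\<in>feas. obj \<xi> \<le> obj \<xi>s) \<longrightarrow>
            hadamard Z \<xi>s \<in> Omega L n k alpha E
          \<and> (\<forall>W\<in>Omega L n k alpha E.
                sqnorm L n (\<lambda>u j. hadamard Z \<xi>s u j - Z u j) \<le> sqnorm L n (\<lambda>u j. W u j - Z u j)))"
  proof (intro conjI ballI impI)
    show "\<exists>W\<in>Omega L n k alpha E. sqnorm L n (\<lambda>u j. W u j - Z u j) = sqnorm L n Z - mx"
      using A[OF x0(1)] x0(2) by blast
    show "\<And>W. W \<in> Omega L n k alpha E \<Longrightarrow> sqnorm L n Z - mx \<le> sqnorm L n (\<lambda>u j. W u j - Z u j)"
      using lower by blast
  next
    fix \<xi>s assume xs: "\<xi>s \<in> feas" and opt: "\<forall>\<xi>\<in>feas. obj \<xi> \<le> obj \<xi>s"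
    have "obj \<xi>s = mx" using opt x0 ge xs by force
    then show "hadamard Z \<xi>s \<in> Omega L n k alpha E" using A[OF xs] by blast
    fix W assume "W \<in> Omega L n k alpha E"
    then show "sqnorm L n (\<lambda>u j. hadamard Z \<xi>s u j - Z u j) \<le> sqnorm L n (\<lambda>u j. W u j - Z u j)"
      using A[OF xs] lower \<open>obj \<xi>s = mx\<close> by simp
  qed
  show ?thesis unfolding Let_def using R unfolding mx_def feas_def obj_def C_def .
qed

end
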